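(* Assume $d_0\delta>2$, and let $\varepsilon_0=\frac{d_0}2-\frac1\delta>0$ and $t=\frac{d_0}{2}$. Let $G=(L\cup R,E)$ be a $(c,d,\alpha,\delta)$-bipartite expander with $L=[n]$, $C_0\subseteq\mathbb{F}_2^d$ a linear code of minimum distance $d_0$, and $x\in\mathbb{F}_2^n$, $y\in T(G,C_0)$ with $d_H(x,y)\le\alpha n$. Then there exists $q\in W\setminus\{0\}$ such that, with $x'=\mathsf{DeterFlip}(x,q)$, $|F(x',y)|\le\left(1-\frac{\varepsilon_0\delta}{2ct^2}\right)|F(x,y)|$.
   Context: A bipartite graph is $(c,d)$-regular if left degrees are $c$ and right degrees $d$; $N(S)$ is the neighborhood of $S$. A $(c,d,\alpha,\delta)$-bipartite expander ($\alpha,\delta\in(0,1]$) is a $(c,d)$-regular bipartite graph with $|N(S)|\ge\delta c|S|$ for all $S\subseteq L$, $|S|\le\alpha|L|$. Tanner code: $L=[n]$, for each $v\in R$ a fixed ordering of $N(v)$ defines $x_{N(v)}\in\mathbb{F}_2^d$, and $T(G,C_0)=\{x:x_{N(v)}\in C_0\ \forall v\in R\}$. $F(x,y)=\{i\in[n]:x_i\ne y_i\}$; $d_H$ is Hamming distance. $\mathsf{Decode}(z)$ is the codeword of $C_0$ closest to $z\in\mathbb{F}_2^d$, ties broken lexicographically. $W=\{\frac{i}{cd_0}:i\in\mathbb{Z},0\le i\le cd_0\}$. $\mathsf{DeterFlip}(x,q)$ for $q\in\mathbb{R}$: set $p_1=\dots=p_n=0$; for each $v\in R$, let $w_v=\mathsf{Decode}(x_{N(v)})$;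 if $1\le d_H(w_v,x_{N(v)})<t$, let $i$ be the smallest element of $N(v)$ where $w_v$ and $x_{N(v)}$ differ and increase $p_i$ by $\frac{t-d_H(w_v,x_{N(v)})}{ct}$; then flip every $x_i$ with $p_i=q$ and return the result. *)

theory Defs
  imports Complex_Main "HOL-Library.List_Lexorder"
begin

text \<open>Bipartite graph with left vertex set L = {..<n} (the paper's [n], 0-based)
 and right vertex set R = {..<m}. For each right vertex v, nbr v is the fixed
 ordering of its neighbourhood N(v) (a distinct list of left vertices).
 Vectors of F_2^n are functions nat => bool (only coordinates < n matter),
 words of F_2^d are bool lists of length d; addition is xor.\<close>

definition left_nbrs :: "nat \<Rightarrow> (nat \<Rightarrow> nat list) \<Rightarrow> nat \<Rightarrow> nat set" where
  "left_nbrs m nbr i = {v. v < m \<and> i \<in> set (nbr v)}"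

definition nbhd :: "nat \<Rightarrow> (nat \<Rightarrow> nat list) \<Rightarrow> nat set \<Rightarrow> nat set" where
  "nbhd m nbr S = {v. v < m \<and> set (nbr v) \<inter> S \<noteq> {}}"

definition bipartite_graph :: "nat \<Rightarrow> nat \<Rightarrow> (nat \<Rightarrow> nat list) \<Rightarrow> bool" where
  "bipartite_graph n m nbr \<longleftrightarrow> (\<forall>v<m. distinct (nbr v) \<and> set (nbr v) \<subseteq> {..<n})"

definition regular_bipartite :: "nat \<Rightarrow> nat \<Rightarrow> nat \<Rightarrow> nat \<Rightarrow> (nat \<Rightarrow> nat list) \<Rightarrow> bool" where
  "regular_bipartite c d n m nbr \<longleftrightarrow> bipartite_graph n m nbr \<and>
     (\<forall>i<n. card (left_nbrs m nbr i) = c) \<and> (\<forall>v<m. length (nbr v) = d)"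

definition bipartite_expander ::
  "nat \<Rightarrow> nat \<Rightarrow> real \<Rightarrow> real \<Rightarrow> nat \<Rightarrow> nat \<Rightarrow> (nat \<Rightarrow> nat list) \<Rightarrow> bool" where
  "bipartite_expander c d \<alpha> \<delta> n m nbr \<longleftrightarrow>
     0 < \<alpha> \<and> \<alpha> \<le> 1 \<and> 0 < \<delta> \<and> \<delta> \<le> 1 \<and> regular_bipartite c d n m nbr \<and>
     (\<forall>S. S \<subseteq> {..<n} \<longrightarrow> real (card S) \<le> \<alpha> * real n \<longrightarrow>
          real (card (nbhd m nbr S)) \<ge> \<delta> * real c * real (card S))"

definition hdist :: "bool list \<Rightarrow> bool list \<Rightarrow> nat" where
  "hdist u w = card {k. k < length u \<and> k < length w \<and> u ! k \<noteq> w ! k}"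

definition xorw :: "bool list \<Rightarrow> bool list \<Rightarrow> bool list" where
  "xorw u w = map2 (\<noteq>) u w"

definition linear_code :: "nat \<Rightarrow> bool list set \<Rightarrow> bool" where
  "linear_code d C \<longleftrightarrow> (\<forall>w\<in>C. length w = d) \<and> replicate d False \<in> C \<and>
     (\<forall>u\<in>C. \<forall>w\<in>C. xorw u w \<in> C)"

definition min_distance :: "bool list set \<Rightarrow> nat \<Rightarrow> bool" where
  "min_distance C d0 \<longleftrightarrow> (\<exists>u\<in>C. \<exists>w\<in>C. u \<noteq> w \<and> hdist u w = d0) \<and>
     (\<forall>u\<in>C. \<forall>w\<in>C. u \<noteq> w \<longrightarrow> d0 \<le> hdist u w)"

definition restrict_word :: "(nat \<Rightarrow> bool) \<Rightarrow> (nat \<Rightarrow> nat list) \<Rightarrow> nat \<Rightarrow> bool list" where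
  "restrict_word x nbr v = map x (nbr v)"

definition tanner_code :: "nat \<Rightarrow> nat \<Rightarrow> (nat \<Rightarrow> nat list) \<Rightarrow> bool list set \<Rightarrow> (nat \<Rightarrow> bool) set" where
  "tanner_code n m nbr C0 = {x. \<forall>v<m. restrict_word x nbr v \<in> C0}"

definition flips :: "nat \<Rightarrow> (nat \<Rightarrow> bool) \<Rightarrow> (nat \<Rightarrow> bool) \<Rightarrow> nat set" where
  "flips n x y = {i. i < n \<and> x i \<noteq> y i}"

text \<open>Closest codeword, ties broken lexicographically (False < True).\<close>
definition decode :: "bool list set \<Rightarrow> bool list \<Rightarrow> bool list" where
  "decode C z = (let M = {w \<in> C. \<forall>w'\<in>C. hdist w z \<le> hdist w' z}
                 in THE w. w \<in> M \<and> (\<forall>w'\<in>M. w \<le> w'))"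

definition W_set :: "nat \<Rightarrow> nat \<Rightarrow> real set" where
  "W_set c d0 = {real i / (real c * real d0) | i. i \<le> c * d0}"

definition flip_weight ::
  "nat \<Rightarrow> real \<Rightarrow> nat \<Rightarrow> (nat \<Rightarrow> nat list) \<Rightarrow> bool list set \<Rightarrow> (nat \<Rightarrow> bool) \<Rightarrow> nat \<Rightarrow> real" where
  "flip_weight c t m nbr C0 x i =
     (\<Sum>v<m. let z = restrict_word x nbr v; w = decode C0 z; e = hdist w z in
        if 1 \<le> e \<and> real e < t \<and>
           i = Min {nbr v ! k | k. k < length (nbr v) \<and> w ! k \<noteq> z ! k}
        then (t - real e) / (real c * t) else 0)"

definition deter_flip ::
  "nat \<Rightarrow> nat \<Rightarrow> real \<Rightarrow> nat \<Rightarrow> (nat \<Rightarrow> nat list) \<Rightarrow> bool list set \<Rightarrow> (nat \<Rightarrow> bool) \<Rightarrow> real \<Rightarrow> (nat \<Rightarrow> bool)" where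
  "deter_flip n c t m nbr C0 x q =
     (\<lambda>i. if i < n \<and> flip_weight c t m nbr C0 x i = q then \<not> x i else x i)"

end

theory Submission
  imports Defs
begin

lemma hdist_sym: "hdist u w = hdist w u"
  unfolding hdist_def by (metis (mono_tags, lifting))

lemma hdist_triangle:
  assumes "length a = length b" "length b = length c"
  shows "hdist a c \<le> hdist a b + hdist b c"
proof -
  have "{k. k < length a \<and> k < length c \<and> a ! k \<noteq> c ! k} \<subseteq>
        {k. k < length a \<and> k < length b \<and> a ! k \<noteq> b ! k} \<union> {k. k < length b \<and> k < length c \<and> b ! k \<noteq> c ! k}"
    using assms by auto
  then have "hdist a c \<le> card ({k. k < length a \<and> k < length b \<and> a ! k \<noteq> b ! k} \<union> {k. k < length b \<and> k < length c \<and> b ! k \<noteq> c ! k})"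
    unfolding hdist_def by (intro card_mono) auto
  also have "\<dots> \<le> hdist a b + hdist b c" unfolding hdist_def by (rule card_Un_le)
  finally show ?thesis .
qed

lemma hdist_map:
  assumes "distinct l"
  shows "hdist (map y l) (map x l) = card (set l \<inter> {i. x i \<noteq> y i})"
proof -
  have "set l \<inter> {i. x i \<noteq> y i} = (nth l) ` {k. k < length l \<and> y (l ! k) \<noteq> x (l ! k)}"
    by (auto simp: in_set_conv_nth)
  moreover have "inj_on (nth l) {k. k < length l \<and> y (l ! k) \<noteq> x (l ! k)}"
    using assms by (intro inj_on_nth) auto
  moreover have "{k. k < length (map y l) \<and> k < length (map x l) \<and> map y l ! k \<noteq> map x l ! k}
     = {k. k < length l \<and> y (l ! k) \<noteq> x (l ! k)}" by auto
  ultimately show ?thesis unfolding hdist_def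
    by (simp add: card_image)
qed

lemma decode_props:
  assumes "finite C" "C \<noteq> {}"
  shows "decode C z \<in> C \<and> (\<forall>w'\<in>C. hdist (decode C z) z \<le> hdist w' z)"
proof -
  define M where "M = {w \<in> C. \<forall>w'\<in>C. hdist w z \<le> hdist w' z}"
  obtain w0 where w0: "w0 \<in> C" "hdist w0 z = Min ((\<lambda>w. hdist w z) ` C)"
    using assms by (metis (no_types, lifting) Min_in finite_imageI image_iff image_is_empty)
  have "w0 \<in> M" unfolding M_def using w0 assms by auto
  then have Mne: "M \<noteq> {}" by auto
  have Mfin: "finite M" unfolding M_def using assms by auto
  have "decode C z = Min M"
    unfolding decode_def Let_def M_def[symmetric]
  proof (rule the_equality)
    show "Min M \<in> M \<and> (\<forall>w'\<in>M. Min M \<le> w')" using Mne Mfin by auto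
    fix w assume "w \<in> M \<and> (\<forall>w'\<in>M. w \<le> w')"
    then show "w = Min M" using Mne Mfin by (meson Min_in Min_le order_antisym)
  qed
  moreover have "Min M \<in> M" using Mne Mfin by auto
  ultimately show ?thesis unfolding M_def by auto
qed


theorem corollary4p2:
  fixes c d n m d0 :: nat and \<alpha> \<delta> :: real
    and nbr :: "nat \<Rightarrow> nat list" and C0 :: "bool list set" and x y :: "nat \<Rightarrow> bool"
  assumes "c \<ge> 1"
    and "real d0 * \<delta> > 2"
    and "bipartite_expander c d \<alpha> \<delta> n m nbr"
    and "linear_code d C0" and "min_distance C0 d0"
    and "y \<in> tanner_code n m nbr C0"
    and "real (card (flips n x y)) \<le> \<alpha> * real n"
  shows "\<exists>q \<in> W_set c d0 - {0}.
           real (card (flips n (deter_flip n c (real d0 / 2) m nbr C0 x q) y))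
           \<le> (1 - ((real d0 / 2 - 1 / \<delta>) * \<delta>) / (2 * real c * (real d0 / 2)^2))
              * real (card (flips n x y))"
proof -
  define t where "t = real d0 / 2"
  define F where "F = flips n x y"
  have Fsub: "F \<subseteq> {..<n}" and finF: "finite F" unfolding F_def flips_def by auto
  have dpos: "0 < \<delta>" "\<delta> \<le> 1" and dist: "\<And>v. v < m \<Longrightarrow> distinct (nbr v)"
    and nsub: "\<And>v. v < m \<Longrightarrow> set (nbr v) \<subseteq> {..<n}"
    and lcard: "\<And>i. i < n \<Longrightarrow> card (left_nbrs m nbr i) = c"
    and len: "\<And>v. v < m \<Longrightarrow> length (nbr v) = d"
    and expand: "real (card (nbhd m nbr F)) \<ge> \<delta> * real c * real (card F)"
    using assms(3,7) Fsub unfolding bipartite_expander_def regular_bipartite_def bipartite_graph_def F_def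
    by auto
  have d0big: "real d0 > 2" using assms(2) dpos
    by (smt (verit) mult_left_le mult_nonneg_nonneg of_nat_0_le_iff)
  have tpos: "t > 1" using d0big unfolding t_def by simp
  have td: "t * \<delta> > 1" using assms(2) unfolding t_def by simp
  have Clen: "\<And>w. w \<in> C0 \<Longrightarrow> length w = d" using assms(4) unfolding linear_code_def by auto
  have finC: "finite C0"
  proof (rule finite_subset)
    show "C0 \<subseteq> {w. set w \<subseteq> UNIV \<and> length w = d}" using Clen by auto
    show "finite {w. set w \<subseteq> (UNIV::bool set) \<and> length w = d}" by (rule finite_lists_length_eq) simp
  qed
  have neC: "C0 \<noteq> {}" using assms(4) unfolding linear_code_def by auto
  have dec: "\<And>z. decode C0 z \<in> C0 \<and> (\<forall>w'\<in>C0. hdist (decode C0 z) z \<le> hdist w' z)"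
    using decode_props[OF finC neC] by blast
  have mind: "\<And>u w. u \<in> C0 \<Longrightarrow> w \<in> C0 \<Longrightarrow> u \<noteq> w \<Longrightarrow> d0 \<le> hdist u w"
    using assms(5) unfolding min_distance_def by auto
  define z where "z v = restrict_word x nbr v" for v
  define yv where "yv v = restrict_word y nbr v" for v
  define w where "w v = decode C0 (z v)" for v
  define e where "e v = hdist (w v) (z v)" for v
  define e' where "e' v = card (set (nbr v) \<inter> F)" for v
  define I where "I v = Min {nbr v ! k | k. k < length (nbr v) \<and> w v ! k \<noteq> z v ! k}" for v
  define A where "A v \<longleftrightarrow> 1 \<le> e v \<and> real (e v) < t" for v
  define val where "val v = (t - real (e v)) / (real c * t)" for v
  define p where "p i = flip_weight c t m nbr C0 x i" for i
  have p_eq: "p i = (\<Sum>v<m. if A v \<and> i = I v then val v else 0)" for i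
    unfolding p_def flip_weight_def Let_def A_def val_def I_def e_def w_def z_def by (simp add: conj_assoc)
  define s where "s i = (if i \<in> F then 1 else -1::real)" for i
  define contrib where "contrib v = (if A v then s (I v) * val v else 0)" for v
  have yvC: "v < m \<Longrightarrow> yv v \<in> C0" for v using assms(6) unfolding tanner_code_def yv_def by auto
  have wC: "w v \<in> C0" for v using dec unfolding w_def by auto
  have wlen: "length (w v) = d" for v using Clen wC by auto
  have zlen: "v < m \<Longrightarrow> length (z v) = d" for v using len unfolding z_def restrict_word_def by auto
  have yvlen: "v < m \<Longrightarrow> length (yv v) = d" for v using len unfolding yv_def restrict_word_def by auto
  have hd_e': "v < m \<Longrightarrow> hdist (yv v) (z v) = e' v" for v
  proof -
    assume v: "v < m"
    have "hdist (yv v) (z v) = card (set (nbr v) \<inter> {i. x i \<noteq> y i})"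
      unfolding yv_def z_def restrict_word_def using hdist_map[OF dist[OF v]] by blast
    also have "set (nbr v) \<inter> {i. x i \<noteq> y i} = set (nbr v) \<inter> F"
      using nsub[OF v] unfolding F_def flips_def by auto
    finally show ?thesis unfolding e'_def .
  qed
  have e_le: "v < m \<Longrightarrow> e v \<le> e' v" for v
    using dec yvC hd_e' unfolding e_def w_def by metis
  have Iin: "\<exists>k<length (nbr v). I v = nbr v ! k \<and> w v ! k \<noteq> z v ! k" if Av: "A v" and v: "v < m" for v
  proof -
    define K where "K = {nbr v ! k | k. k < length (nbr v) \<and> w v ! k \<noteq> z v ! k}"
    have "K = (\<lambda>k. nbr v ! k) ` {k. k < length (nbr v) \<and> w v ! k \<noteq> z v ! k}" unfolding K_def by auto
    then have finK: "finite K" by simp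
    have "1 \<le> e v" using Av unfolding A_def by auto
    then have "{k. k < length (w v) \<and> k < length (z v) \<and> w v ! k \<noteq> z v ! k} \<noteq> {}"
      unfolding e_def hdist_def by (metis card.empty not_one_le_zero)
    then have "K \<noteq> {}" unfolding K_def using wlen zlen[OF v] len[OF v] by auto
    then have "I v \<in> K" using finK unfolding I_def K_def[symmetric] by (rule Min_in[rotated])
    then show ?thesis unfolding K_def by auto
  qed
  have tc: "real c * t > 0" using assms(1) tpos by simp
  have contrib_lb: "contrib v \<ge> (if 1 \<le> e' v then (t - real (e' v)) / (real c * t) else 0)" if v: "v < m" for v
  proof (cases "1 \<le> e' v")
    case False
    then have "\<not> A v" using e_le[OF v] unfolding A_def by auto
    then show ?thesis using False unfolding contrib_def by simp
  next
    case True
    show ?thesis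
    proof (cases "w v = yv v")
      case wy: True
      then have ee: "e v = e' v" unfolding e_def using hd_e'[OF v] by simp
      show ?thesis
      proof (cases "A v")
        case Av: True
        obtain k where k: "k < length (nbr v)" "I v = nbr v ! k" "w v ! k \<noteq> z v ! k"
          using Iin[OF Av v] by blast
        have "I v \<in> F" using k wy nsub[OF v] unfolding yv_def z_def restrict_word_def F_def flips_def
          by (auto simp: set_conv_nth)
        then show ?thesis using True Av unfolding contrib_def s_def val_def ee by simp
      next
        case nA: False
        then have "real (e' v) \<ge> t" using True ee unfolding A_def by auto
        then have "(t - real (e' v)) / (real c * t) \<le> 0" using tc by (simp add: divide_nonpos_pos)
        then show ?thesis using nA True unfolding contrib_def by simp
      qed
    next
      case wy: False
      have "d0 \<le> hdist (w v) (yv v)" using mind[OF wC yvC[OF v] wy] .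
      also have "\<dots> \<le> hdist (w v) (z v) + hdist (z v) (yv v)"
        using hdist_triangle wlen zlen[OF v] yvlen[OF v] by metis
      also have "\<dots> = e v + e' v" unfolding e_def using hd_e'[OF v] hdist_sym by metis
      finally have sum2: "real (e v) + real (e' v) \<ge> 2 * t" unfolding t_def by simp
      have "real (e' v) \<ge> t" using sum2 e_le[OF v] by linarith
      then have lb0: "(t - real (e' v)) / (real c * t) \<le> 0" using tc by (simp add: divide_nonpos_pos)
      show ?thesis
      proof (cases "A v")
        case Av: True
        have "(t - real (e' v)) / (real c * t) \<le> - val v"
        proof -
          have "(t - real (e' v)) / (real c * t) \<le> (real (e v) - t) / (real c * t)"
            using sum2 tc by (intro divide_right_mono) auto
          also have "\<dots> = - val v" unfolding val_def by (simp add: minus_divide_left)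
          finally show ?thesis .
        qed
        moreover have "val v \<ge> 0" using Av tc unfolding A_def val_def by simp
        ultimately show ?thesis using Av True unfolding contrib_def s_def by auto
      next
        case False
        then show ?thesis using lb0 True unfolding contrib_def by simp
      qed
    qed
  qed
  have Phi: "(\<Sum>i<n. s i * p i) = (\<Sum>v<m. contrib v)"
  proof -
    have "(\<Sum>i<n. s i * p i) = (\<Sum>i<n. \<Sum>v<m. s i * (if A v \<and> i = I v then val v else 0))"
      unfolding p_eq by (simp add: sum_distrib_left)
    also have "\<dots> = (\<Sum>v<m. \<Sum>i<n. s i * (if A v \<and> i = I v then val v else 0))"
      by (rule sum.swap)
    also have "\<dots> = (\<Sum>v<m. contrib v)"
    proof (rule sum.cong[OF refl])
      fix v assume "v \<in> {..<m}"
      then have v: "v < m" by simp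
      show "(\<Sum>i<n. s i * (if A v \<and> i = I v then val v else 0)) = contrib v"
      proof (cases "A v")
        case True
        then have "I v < n" using Iin[OF True v] nsub[OF v] by (auto simp: set_conv_nth)
        then show ?thesis using True unfolding contrib_def by (simp add: if_distrib cong: if_cong)
      next
        case False
        then show ?thesis unfolding contrib_def by simp
      qed
    qed
    finally show ?thesis .
  qed
  have dc: "(\<Sum>v<m. real (e' v)) = real c * real (card F)"
  proof -
    have "(\<Sum>v<m. e' v) = (\<Sum>v<m. \<Sum>i\<in>F. if i \<in> set (nbr v) then 1 else 0)"
    proof -
      have "card (set (nbr v) \<inter> F) = (\<Sum>i\<in>F. if i \<in> set (nbr v) then 1 else 0)" for v
      proof -
        have "card (set (nbr v) \<inter> F) = card {i \<in> F. i \<in> set (nbr v)}" by (metis Int_commute Int_def)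
        also have "\<dots> = (\<Sum>i\<in>{i \<in> F. i \<in> set (nbr v)}. 1)" by (rule card_eq_sum)
        also have "\<dots> = (\<Sum>i\<in>F. if i \<in> set (nbr v) then 1 else 0)" using finF by (rule sum.inter_filter)
        finally show ?thesis .
      qed
      then show ?thesis by (simp add: e'_def)
    qed
    also have "\<dots> = (\<Sum>i\<in>F. \<Sum>v<m. if i \<in> set (nbr v) then 1 else 0)" by (rule sum.swap)
    also have "\<dots> = (\<Sum>i\<in>F. c)"
    proof (rule sum.cong[OF refl])
      fix i assume "i \<in> F"
      then have "i < n" using Fsub by auto
      have "(\<Sum>v<m. if i \<in> set (nbr v) then 1 else 0) = card {v \<in> {..<m}. i \<in> set (nbr v)}"
        by (simp only: card_eq_sum sum.inter_filter[OF finite_lessThan])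
      also have "{v \<in> {..<m}. i \<in> set (nbr v)} = left_nbrs m nbr i" unfolding left_nbrs_def by auto
      finally show "(\<Sum>v<m. if i \<in> set (nbr v) then 1 else 0) = c" using lcard[OF \<open>i < n\<close>] by simp
    qed
    finally have "(\<Sum>v<m. e' v) = c * card F" by simp
    then show ?thesis by (metis of_nat_mult of_nat_sum)
  qed
  have NF: "(\<Sum>v<m. if 1 \<le> e' v then 1 / real c else 0) = real (card (nbhd m nbr F)) / real c"
  proof -
    have "{v \<in> {..<m}. 1 \<le> e' v} = nbhd m nbr F"
      unfolding nbhd_def e'_def using finF by (auto simp: Suc_le_eq card_gt_0_iff)
    moreover have "{..<m} \<inter> {v. 1 \<le> e' v} = {v \<in> {..<m}. 1 \<le> e' v}" by auto
    ultimately show ?thesis by (simp add: sum.If_cases)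
  qed
  have Phi_lb: "(\<Sum>v<m. contrib v) \<ge> (\<delta> - 1 / t) * real (card F)"
  proof -
    have L1: "(\<Sum>v<m. contrib v) \<ge> (\<Sum>v<m. (if 1 \<le> e' v then 1 / real c else 0) - real (e' v) / (real c * t))"
    proof (rule sum_mono)
      fix v assume "v \<in> {..<m}"
      then have "contrib v \<ge> (if 1 \<le> e' v then (t - real (e' v)) / (real c * t) else 0)"
        using contrib_lb by simp
      moreover have "(if 1 \<le> e' v then (t - real (e' v)) / (real c * t) else 0)
          = (if 1 \<le> e' v then 1 / real c else 0) - real (e' v) / (real c * t)"
        using tc tpos by (auto simp: diff_divide_distrib)
      ultimately show "(if 1 \<le> e' v then 1 / real c else 0) - real (e' v) / (real c * t) \<le> contrib v"
        by simp
    qed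
    have L2: "(\<Sum>v<m. (if 1 \<le> e' v then 1 / real c else 0) - real (e' v) / (real c * t))
       = real (card (nbhd m nbr F)) / real c - real c * real (card F) / (real c * t)"
      unfolding sum_subtractf NF by (simp add: dc flip: sum_divide_distrib)
    have L3: "real (card (nbhd m nbr F)) / real c - real c * real (card F) / (real c * t) \<ge> (\<delta> - 1 / t) * real (card F)"
    proof -
      have "real (card (nbhd m nbr F)) / real c \<ge> \<delta> * real (card F)"
        using expand assms(1) by (simp add: field_simps)
      moreover have "real c * real (card F) / (real c * t) = real (card F) / t" using assms(1) by simp
      ultimately show ?thesis by (simp add: algebra_simps)
    qed
    from L1 L2 L3 show ?thesis by linarith
  qed
  define W where "W = W_set c d0"
  have d0pos: "d0 \<ge> 1" using d0big by simp
  have cd0: "real c * real d0 > 0" using assms(1) d0pos by simp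
  have W_img: "W = (\<lambda>j. real j / (real c * real d0)) ` {..c * d0}"
    unfolding W_def W_set_def by auto
  have finW: "finite W" unfolding W_img by simp
  have cardW: "card W \<le> c * d0 + 1" unfolding W_img using card_image_le[OF finite_atMost, of "\<lambda>j. real j / (real c * real d0)" "c * d0"] by simp
  have zW: "0 \<in> W" unfolding W_img by force
  have oneW: "1 \<in> W - {0}"
  proof -
    have "real (c * d0) / (real c * real d0) = 1" using cd0 assms(1) d0pos by simp
    moreover have "(1::real) \<noteq> 0" by simp
    ultimately show ?thesis unfolding W_img by (metis DiffI atMost_iff image_eqI order_refl singletonD)
  qed
  have cardW0: "card (W - {0}) \<le> c * d0" using cardW zW finW by (simp add: card_Diff_singleton)
  have W_le1: "q \<in> W \<Longrightarrow> q \<le> 1" for q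
    unfolding W_img using cd0 by (auto simp: divide_le_eq simp flip: of_nat_mult)
  have W_ge0: "q \<in> W \<Longrightarrow> q \<ge> 0" for q unfolding W_img by auto
  have pW: "p i \<in> W" if i: "i < n" for i
  proof -
    define k where "k = (\<Sum>v<m. if A v \<and> i = I v then d0 - 2 * e v else 0)"
    have Ad: "A v \<Longrightarrow> 2 * e v < d0" for v unfolding A_def t_def by linarith
    have valv: "val v = (real d0 - 2 * real (e v)) / (real c * real d0)" for v
      unfolding val_def t_def using assms(1) d0pos by (simp add: field_simps)
    have "real k = (\<Sum>v<m. if A v \<and> i = I v then real d0 - 2 * real (e v) else 0)"
      unfolding k_def of_nat_sum by (intro sum.cong refl) (auto simp: of_nat_diff Ad less_imp_le)
    note rk = this
    have "p i = (\<Sum>v<m. (if A v \<and> i = I v then real d0 - 2 * real (e v) else 0) / (real c * real d0))"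
      unfolding p_eq valv by (intro sum.cong) auto
    also have "\<dots> = real k / (real c * real d0)" unfolding sum_divide_distrib[symmetric] rk ..
    finally have pk: "p i = real k / (real c * real d0)" .
    have "k = (\<Sum>v\<in>left_nbrs m nbr i. if A v \<and> i = I v then d0 - 2 * e v else 0)"
      unfolding k_def
    proof (rule sum.mono_neutral_right)
      show "left_nbrs m nbr i \<subseteq> {..<m}" unfolding left_nbrs_def by auto
      show "\<forall>v\<in>{..<m} - left_nbrs m nbr i. (if A v \<and> i = I v then d0 - 2 * e v else 0) = 0"
      proof
        fix v assume v: "v \<in> {..<m} - left_nbrs m nbr i"
        show "(if A v \<and> i = I v then d0 - 2 * e v else 0) = 0"
        proof (cases "A v \<and> i = I v")
          case True
          then have "i \<in> set (nbr v)" using Iin[of v] v by (auto simp: set_conv_nth)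
          then show ?thesis using v unfolding left_nbrs_def by auto
        qed auto
      qed
    qed simp
    also have "\<dots> \<le> (\<Sum>v\<in>left_nbrs m nbr i. d0)" by (intro sum_mono) auto
    also have "\<dots> = c * d0" using lcard[OF i] by simp
    finally have "k \<le> c * d0" .
    then show ?thesis unfolding pk W_def W_set_def by auto
  qed
  define D where "D q = (\<Sum>i\<in>{i \<in> {..<n}. p i = q}. s i)" for q
  have PhiD: "(\<Sum>i<n. s i * p i) = (\<Sum>q\<in>W - {0}. q * D q)"
  proof -
    have "(\<Sum>i<n. s i * p i) = (\<Sum>q\<in>W. \<Sum>i\<in>{i \<in> {..<n}. p i = q}. s i * p i)"
      by (rule sum.group[symmetric]) (use pW finW in auto)
    also have "\<dots> = (\<Sum>q\<in>W. q * D q)" unfolding D_def sum_distrib_left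
      by (intro sum.cong refl) (auto simp: mult.commute)
    also have "\<dots> = (\<Sum>q\<in>W - {0}. q * D q)" using finW zW by (simp add: sum_diff1)
    finally show ?thesis .
  qed
  define Phi0 where "Phi0 = (\<delta> - 1 / t) * real (card F)"
  have Phi0pos: "Phi0 \<ge> 0" unfolding Phi0_def using td tpos
    by (intro mult_nonneg_nonneg) (auto simp: field_simps)
  obtain q where q: "q \<in> W - {0}" "q * D q \<ge> Phi0 / (real c * real d0)"
  proof (rule ccontr)
    assume "\<not> thesis"
    then have all: "\<forall>q\<in>W - {0}. q * D q < Phi0 / (real c * real d0)" using that by force
    have "(\<Sum>q\<in>W - {0}. q * D q) < (\<Sum>q\<in>W - {0}. Phi0 / (real c * real d0))"
      using finW oneW all by (intro sum_strict_mono) auto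
    also have "\<dots> = real (card (W - {0})) * (Phi0 / (real c * real d0))" by simp
    also have "\<dots> \<le> real (c * d0) * (Phi0 / (real c * real d0))"
      using cardW0 Phi0pos cd0 by (intro mult_right_mono) (auto simp flip: of_nat_mult)
    also have "\<dots> = Phi0" using assms(1) d0pos by simp
    finally show False using PhiD Phi Phi_lb unfolding Phi0_def by linarith
  qed
  have Dq: "D q \<ge> Phi0 / (real c * real d0)"
  proof -
    have q01: "0 < q" "q \<le> 1" using q(1) W_le1 W_ge0 by force+
    have rhs0: "Phi0 / (real c * real d0) \<ge> 0" using Phi0pos cd0 by simp
    then have "D q \<ge> 0" using q(2) q01 by (smt (verit) mult_pos_neg)
    then have "q * D q \<le> D q" using q01 by (simp add: mult_left_le_one_le)
    then show ?thesis using q(2) by linarith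
  qed
  define S where "S = {i \<in> {..<n}. p i = q}"
  have finS: "finite S" unfolding S_def by simp
  have DS: "D q = real (card (S \<inter> F)) - real (card (S - F))"
  proof -
    have "D q = (\<Sum>i\<in>S \<inter> {i. i \<in> F}. 1) + (\<Sum>i\<in>S \<inter> - {i. i \<in> F}. -1)"
      unfolding D_def S_def[symmetric] s_def using finS by (rule sum.If_cases)
    moreover have "S \<inter> {i. i \<in> F} = S \<inter> F" "S \<inter> - {i. i \<in> F} = S - F" by auto
    ultimately show ?thesis by simp
  qed
  have flipsx': "flips n (deter_flip n c (real d0 / 2) m nbr C0 x q) y = (F - S) \<union> (S - F)"
    unfolding flips_def deter_flip_def F_def S_def p_def t_def by auto
  have cardx': "real (card (flips n (deter_flip n c (real d0 / 2) m nbr C0 x q) y)) = real (card F) - D q"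
  proof -
    have "card ((F - S) \<union> (S - F)) = card (F - S) + card (S - F)"
      using finF finS by (intro card_Un_disjoint) auto
    moreover have "card F = card (F - S) + card (S \<inter> F)"
    proof -
      have "F = (F - S) \<union> (S \<inter> F)" by auto
      then have "card F = card ((F - S) \<union> (S \<inter> F))" by simp
      also have "\<dots> = card (F - S) + card (S \<inter> F)" using finF finS by (intro card_Un_disjoint) auto
      finally show ?thesis .
    qed
    ultimately show ?thesis unfolding flipsx' DS by simp
  qed
  have kap: "Phi0 / (real c * real d0) = ((real d0 / 2 - 1 / \<delta>) * \<delta>) / (2 * real c * (real d0 / 2)^2) * real (card F)"
    unfolding Phi0_def using tpos dpos assms(1) unfolding t_def by (simp add: field_simps power2_eq_square)
  show ?thesis
  proof (rule bexI[OF _ q(1)[unfolded W_def]])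
    show "real (card (flips n (deter_flip n c (real d0 / 2) m nbr C0 x q) y))
           \<le> (1 - ((real d0 / 2 - 1 / \<delta>) * \<delta>) / (2 * real c * (real d0 / 2)^2))
              * real (card (flips n x y))"
      using cardx' Dq kap unfolding F_def by (simp add: algebra_simps)
  qed
qed

end
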